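(* Let $M\ge 1$ and $0<p_1<p_2<\cdots<p_M$ be real numbers. For arbitrary real constants $c_1,\ldots,c_M$ define, for $(x,t)\in\mathbb{R}^2$, \[ \tau(x,t)=\sum_{A\in\{-1,1\}^M} e^{\Theta_A},\qquad \Theta_A=\sum_{j=1}^M \alpha_j\,\theta_j+\log\Delta_A, \] where $A=(\alpha_1,\ldots,\alpha_M)$, $\theta_j=p_j\,(x+p_j^2\,t+c_j)$, and $\Delta_A=\big|\prod_{1\le j<k\le M}(\alpha_k p_k-\alpha_j p_j)\big|$ (the absolute value of the Vandermonde determinant of $\alpha_1p_1,\ldots,\alpha_Mp_M$). Then $2(\log\tau)_{xx}=2(\log\tau_H)_{xx}$, where $\tau_H$ is the Hirota $\tau$-function \[ \tau_H=\sum_{\mu_1,\ldots,\mu_M=0,1}\exp\Big(\sum_{j=1}^M\mu_j\eta_j+\sum_{1\le j<k\le M}b_{jk}\,\mu_j\mu_k\Big), \] with $\eta_j=2p_j\,(x+p_j^2\,t+\tilde c_j)$, $b_{jk}=\log\big[(p_k-p_j)^2/(p_k+p_j)^2\big]$, and $\tilde c_j=c_j+\frac{1}{2p_j}\log\Big|\prod_{k\neq j}\frac{p_k+p_j}{p_k-p_j}\Big|$. Consequently, $u=2(\log\tau)_{xx}$, as $c_1,\ldots,c_M$ range over $\mathbb{R}$, gives exactly the $M$-soliton solutions $u=2(\log\tau_H)_{xx}$ (with arbitrary real $\tilde c_1,\ldots,\tilde c_M$) of the KdV equation $4u_t=u_{xxx}+6uu_x$.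
   Context: Subscripts denote partial derivatives. The $M$-soliton solution of the KdV equation $4u_t=u_{xxx}+6uu_x$ with parameters $0<p_1<\cdots<p_M$ and arbitrary real constants $\tilde c_j$ is $u=2(\log\tau_H)_{xx}$ with $\tau_H$ as given in the claim. *)

theory Defs
  imports "HOL-Analysis.Analysis"
begin

text \<open>Indices j = 0,...,M-1 (0-based). Sign vectors A in {-1,1}^M are
extensional functions in PiE {..<M} (\<lambda>_. {-1,1}).\<close>

definition pairsM :: "nat \<Rightarrow> (nat \<times> nat) set" where
  "pairsM M = {(j, k). j < k \<and> k < M}"

definition DeltaA :: "nat \<Rightarrow> (nat \<Rightarrow> real) \<Rightarrow> (nat \<Rightarrow> real) \<Rightarrow> real" where
  "DeltaA M p A = \<bar>\<Prod>(j, k)\<in>pairsM M. (A k * p k - A j * p j)\<bar>"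

definition ThetaA :: "nat \<Rightarrow> (nat \<Rightarrow> real) \<Rightarrow> (nat \<Rightarrow> real) \<Rightarrow> (nat \<Rightarrow> real) \<Rightarrow> real \<Rightarrow> real \<Rightarrow> real" where
  "ThetaA M p c A x t = (\<Sum>j<M. A j * (p j * (x + (p j)\<^sup>2 * t + c j))) + ln (DeltaA M p A)"

definition tau :: "nat \<Rightarrow> (nat \<Rightarrow> real) \<Rightarrow> (nat \<Rightarrow> real) \<Rightarrow> real \<Rightarrow> real \<Rightarrow> real" where
  "tau M p c x t = (\<Sum>A\<in>PiE {..<M} (\<lambda>_. {-1, 1}). exp (ThetaA M p c A x t))"

definition b_coef :: "(nat \<Rightarrow> real) \<Rightarrow> nat \<Rightarrow> nat \<Rightarrow> real" where
  "b_coef p j k = ln ((p k - p j)\<^sup>2 / (p k + p j)\<^sup>2)"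

definition tauH :: "nat \<Rightarrow> (nat \<Rightarrow> real) \<Rightarrow> (nat \<Rightarrow> real) \<Rightarrow> real \<Rightarrow> real \<Rightarrow> real" where
  "tauH M p ct x t = (\<Sum>\<mu>\<in>PiE {..<M} (\<lambda>_. {0, 1}).
      exp ((\<Sum>j<M. \<mu> j * (2 * p j * (x + (p j)\<^sup>2 * t + ct j)))
           + (\<Sum>(j, k)\<in>pairsM M. b_coef p j k * \<mu> j * \<mu> k)))"

definition ctilde :: "nat \<Rightarrow> (nat \<Rightarrow> real) \<Rightarrow> (nat \<Rightarrow> real) \<Rightarrow> nat \<Rightarrow> real" where
  "ctilde M p c j = c j + 1 / (2 * p j) *
      ln \<bar>\<Prod>k\<in>{..<M} - {j}. (p k + p j) / (p k - p j)\<bar>"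

definition uxx :: "(real \<Rightarrow> real \<Rightarrow> real) \<Rightarrow> real \<Rightarrow> real \<Rightarrow> real" where
  "uxx F x t = 2 * deriv (\<lambda>y. deriv (\<lambda>z. ln (F z t)) y) x"

end

theory Submission
  imports Defs
begin

lemma prod_offdiag:
  fixes g :: "nat \<Rightarrow> nat \<Rightarrow> real"
  shows "(\<Prod>j<M. \<Prod>k\<in>{..<M}-{j}. g j k) = (\<Prod>(j,k)\<in>pairsM M. g j k * g k j)"
proof -
  have fin: "finite (pairsM M)"
    by (rule finite_subset[of _ "{..<M} \<times> {..<M}"]) (auto simp: pairsM_def)
  have "(\<Prod>j<M. \<Prod>k\<in>{..<M}-{j}. g j k) = (\<Prod>(j,k)\<in>Sigma {..<M} (\<lambda>j. {..<M}-{j}). g j k)"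
    by (rule prod.Sigma) auto
  also have "Sigma {..<M} (\<lambda>j. {..<M}-{j}) = pairsM M \<union> prod.swap ` pairsM M"
    by (auto simp: pairsM_def image_iff)
  also have "(\<Prod>(j,k)\<in>pairsM M \<union> prod.swap ` pairsM M. g j k) =
      (\<Prod>(j,k)\<in>pairsM M. g j k) * (\<Prod>(j,k)\<in>prod.swap ` pairsM M. g j k)"
    by (rule prod.union_disjoint) (use fin in \<open>auto simp: pairsM_def\<close>)
  also have "(\<Prod>(j,k)\<in>prod.swap ` pairsM M. g j k) = (\<Prod>(j,k)\<in>pairsM M. g k j)"
    by (subst prod.reindex) (auto simp: o_def case_prod_unfold)
  finally show ?thesis by (simp add: prod.distrib case_prod_unfold)
qed

lemma pairs_fin: "finite (pairsM M)"
  by (rule finite_subset[of _ "{..<M} \<times> {..<M}"]) (auto simp: pairsM_def)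

lemma per_mu:
  fixes M :: nat and p c :: "nat \<Rightarrow> real" and \<mu> :: "nat \<Rightarrow> real"
  assumes pos: "\<And>j. j < M \<Longrightarrow> 0 < p j"
    and mono: "\<And>j k. j < k \<Longrightarrow> k < M \<Longrightarrow> p j < p k"
    and mu: "\<mu> \<in> PiE {..<M} (\<lambda>_. {0, 1})"
  shows "exp (ThetaA M p c (restrict (\<lambda>j. 2 * \<mu> j - 1) {..<M}) x t) =
     (\<Prod>(j,k)\<in>pairsM M. p k - p j) * exp (- (\<Sum>j<M. p j * (x + (p j)\<^sup>2 * t + c j))) *
     exp ((\<Sum>j<M. \<mu> j * (2 * p j * (x + (p j)\<^sup>2 * t + ctilde M p c j)))
           + (\<Sum>(j, k)\<in>pairsM M. b_coef p j k * \<mu> j * \<mu> k))"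
proof -
  define A where "A = restrict (\<lambda>j. 2 * \<mu> j - 1) {..<M}"
  define th where "th j = p j * (x + (p j)\<^sup>2 * t + c j)" for j
  define g where "g j k = (if \<mu> j = 1 then \<bar>(p k + p j) / (p k - p j)\<bar> else 1)" for j k
  define e where "e j k = (if \<mu> j = 1 \<and> \<mu> k = 1 then (p k - p j)\<^sup>2 / (p k + p j)\<^sup>2 else 1)" for j k
  have mu01: "\<mu> j = 0 \<or> \<mu> j = 1" if "j < M" for j using mu that by (auto simp: PiE_def Pi_def)
  have pair: "\<bar>A k * p k - A j * p j\<bar> = (p k - p j) * (g j k * g k j) * e j k"
    if "(j,k) \<in> pairsM M" for j k
  proof -
    have jk: "j < k" "k < M" using that by (auto simp: pairsM_def)
    have pj: "0 < p j" "p j < p k" using pos mono jk by auto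
    have Aj: "A j = 2 * \<mu> j - 1" "A k = 2 * \<mu> k - 1" using jk by (auto simp: A_def)
    have "p k - p j \<noteq> 0" "p k + p j \<noteq> 0" using pj by auto
    have R: "\<bar>(p k + p j) / (p k - p j)\<bar> = (p k + p j) / (p k - p j)" using pj by auto
    have both: "(p k - p j) * ((p k + p j) / (p k - p j) * ((p k + p j) / (p k - p j))) *
        ((p k - p j)\<^sup>2 / (p k + p j)\<^sup>2) = p k - p j"
    proof -
      have gen: "a * (b / a * (b / a)) * (a\<^sup>2 / b\<^sup>2) = a" if "a > 0" "b > 0" for a b :: real
        using that by (simp add: field_simps power2_eq_square)
      show ?thesis using pj by (intro gen) auto
    qed
    have R2: "\<bar>(p j + p k) / (p j - p k)\<bar> = (p k + p j) / (p k - p j)" using pj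
      by (simp add: abs_div add.commute)
    show ?thesis
    proof (cases "\<mu> j = 1 \<and> \<mu> k = 1")
      case True then show ?thesis unfolding Aj g_def e_def R R2 using both pj by simp
    next
      case False
      then show ?thesis
        using mu01[of j] mu01[of k] jk pj unfolding Aj g_def e_def R R2
        by (auto simp: field_simps abs_if)
    qed
  qed
  have Delta: "DeltaA M p A = (\<Prod>(j,k)\<in>pairsM M. (p k - p j) * (g j k * g k j) * e j k)"
    unfolding DeltaA_def abs_prod by (rule prod.cong) (auto simp: pair)
  have Dpos: "DeltaA M p A > 0"
    unfolding Delta
  proof (rule prod_pos, clarify)
    fix j k assume "(j,k) \<in> pairsM M"
    then have jk: "j < k" "k < M" by (auto simp: pairsM_def)
    have pj: "0 < p j" "p j < p k" using pos mono jk by auto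
    then show "0 < (p k - p j) * (g j k * g k j) * e j k"
      unfolding g_def e_def by (intro mult_pos_pos) auto
  qed
  have lhs: "exp (ThetaA M p c A x t) = exp (\<Sum>j<M. 2 * \<mu> j * th j) * exp (- (\<Sum>j<M. th j)) * DeltaA M p A"
  proof -
    have "(\<Sum>j<M. A j * (p j * (x + (p j)\<^sup>2 * t + c j))) = (\<Sum>j<M. 2 * \<mu> j * th j) - (\<Sum>j<M. th j)"
      unfolding sum_subtractf[symmetric] by (rule sum.cong) (auto simp: A_def th_def algebra_simps)
    then show ?thesis using Dpos
      by (simp add: ThetaA_def exp_add exp_diff exp_minus divide_inverse mult_ac)
  qed
  have Pj: "exp (\<mu> j * ln \<bar>\<Prod>k\<in>{..<M} - {j}. (p k + p j) / (p k - p j)\<bar>) = (\<Prod>k\<in>{..<M}-{j}. g j k)"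
    if "j < M" for j
  proof (cases "\<mu> j = 1")
    case True
    have "(\<Prod>k\<in>{..<M} - {j}. (p k + p j) / (p k - p j)) \<noteq> 0"
    proof -
      have "\<forall>k\<in>{..<M} - {j}. (p k + p j) / (p k - p j) \<noteq> 0"
      proof
        fix k assume k: "k \<in> {..<M} - {j}"
        have "p k + p j > 0" using pos[of k] pos[of j] k that by auto
        moreover have "p k \<noteq> p j" using mono[of j k] mono[of k j] k that
          by (cases "j < k") auto
        ultimately show "(p k + p j) / (p k - p j) \<noteq> 0" by auto
      qed
      then show ?thesis by (simp add: prod_zero_iff)
    qed
    then have "exp (\<mu> j * ln \<bar>\<Prod>k\<in>{..<M} - {j}. (p k + p j) / (p k - p j)\<bar>) =
        \<bar>\<Prod>k\<in>{..<M} - {j}. (p k + p j) / (p k - p j)\<bar>" using True by simp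
    also have "\<dots> = (\<Prod>k\<in>{..<M}-{j}. g j k)" unfolding g_def using True by (simp add: abs_prod)
    finally show ?thesis .
  next
    case False
    then have "\<mu> j = 0" using mu01 that by auto
    then show ?thesis by (simp add: g_def)
  qed
  have be: "exp (b_coef p j k * \<mu> j * \<mu> k) = e j k" if "(j,k) \<in> pairsM M" for j k
  proof -
    have jk: "j < k" "k < M" using that by (auto simp: pairsM_def)
    have pj: "0 < p j" "p j < p k" using pos mono jk by auto
    have "0 < (p k - p j)\<^sup>2 / (p k + p j)\<^sup>2" using pj by auto
    then show ?thesis using mu01[of j] mu01[of k] jk unfolding e_def b_coef_def by auto
  qed
  have rhs_exp: "(\<Sum>j<M. \<mu> j * (2 * p j * (x + (p j)\<^sup>2 * t + ctilde M p c j)))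
      = (\<Sum>j<M. 2 * \<mu> j * th j) + (\<Sum>j<M. \<mu> j * ln \<bar>\<Prod>k\<in>{..<M} - {j}. (p k + p j) / (p k - p j)\<bar>)"
    unfolding sum.distrib[symmetric]
  proof (rule sum.cong)
    fix j assume "j \<in> {..<M}"
    then have "p j \<noteq> 0" using pos by force
    then show "\<mu> j * (2 * p j * (x + (p j)\<^sup>2 * t + ctilde M p c j)) =
       2 * \<mu> j * th j + \<mu> j * ln \<bar>\<Prod>k\<in>{..<M} - {j}. (p k + p j) / (p k - p j)\<bar>"
      by (simp add: ctilde_def th_def field_simps)
  qed simp
  have "exp ((\<Sum>j<M. \<mu> j * (2 * p j * (x + (p j)\<^sup>2 * t + ctilde M p c j)))
           + (\<Sum>(j, k)\<in>pairsM M. b_coef p j k * \<mu> j * \<mu> k))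
     = exp (\<Sum>j<M. 2 * \<mu> j * th j) * (\<Prod>j<M. \<Prod>k\<in>{..<M}-{j}. g j k) * (\<Prod>(j,k)\<in>pairsM M. e j k)"
    unfolding rhs_exp exp_add exp_sum[OF finite_lessThan] exp_sum[OF pairs_fin]
    using Pj be by (simp add: case_prod_unfold)
  also have "\<dots> = exp (\<Sum>j<M. 2 * \<mu> j * th j) * (\<Prod>(j,k)\<in>pairsM M. (g j k * g k j) * e j k)"
    unfolding prod_offdiag by (simp add: prod.distrib case_prod_unfold)
  finally have rhs: "exp ((\<Sum>j<M. \<mu> j * (2 * p j * (x + (p j)\<^sup>2 * t + ctilde M p c j)))
           + (\<Sum>(j, k)\<in>pairsM M. b_coef p j k * \<mu> j * \<mu> k))
     = exp (\<Sum>j<M. 2 * \<mu> j * th j) * (\<Prod>(j,k)\<in>pairsM M. (g j k * g k j) * e j k)" .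
  show ?thesis
    unfolding A_def[symmetric] lhs rhs Delta th_def[symmetric]
    by (simp add: prod.distrib case_prod_unfold mult_ac)
qed

lemma deriv_minus_const: "deriv (\<lambda>y. g y - (a::real)) x = deriv g x"
proof -
  have "(\<lambda>D. ((\<lambda>y. g y - a) has_field_derivative D) (at x)) = (\<lambda>D. (g has_field_derivative D) (at x))"
  proof (intro ext iffI)
    fix D assume "((\<lambda>y. g y - a) has_field_derivative D) (at x)"
    then have "((\<lambda>y. (g y - a) + a) has_field_derivative D + 0) (at x)"
      by (intro derivative_intros)
    then show "(g has_field_derivative D) (at x)" by simp
  next
    fix D assume "(g has_field_derivative D) (at x)"
    then have "((\<lambda>y. g y - a) has_field_derivative D - 0) (at x)"
      by (intro derivative_intros)
    then show "((\<lambda>y. g y - a) has_field_derivative D) (at x)" by simp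
  qed
  then show ?thesis by (simp add: deriv_def)
qed

lemma uxx_eq:
  fixes F G :: "real \<Rightarrow> real \<Rightarrow> real"
  assumes FG: "\<And>z. F z t = K * exp (- (a * z + b)) * G z t"
    and K: "K > 0" and Gpos: "\<And>z. G z t > 0"
    and Gd: "\<And>y. \<exists>D. ((\<lambda>z. G z t) has_real_derivative D) (at y)"
  shows "uxx F x t = uxx G x t"
proof -
  have hd: "((\<lambda>z. ln (G z t)) has_real_derivative deriv (\<lambda>z. ln (G z t)) y) (at y)" for y
  proof -
    obtain D where "((\<lambda>z. G z t) has_real_derivative D) (at y)" using Gd by blast
    then have "((\<lambda>z. ln (G z t)) has_real_derivative 1 / G y t * D) (at y)"
      by (rule DERIV_chain2[where g="\<lambda>z. G z t", OF DERIV_ln_divide[OF Gpos[of y]]])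
    then show ?thesis by (simp add: DERIV_imp_deriv)
  qed
  have lnF: "(\<lambda>z. ln (F z t)) = (\<lambda>z. ln K - (a * z + b) + ln (G z t))"
  proof
    fix z
    have "ln (F z t) = ln K + ln (exp (- (a * z + b))) + ln (G z t)"
      unfolding FG using K Gpos[of z] by (simp add: ln_mult)
    then show "ln (F z t) = ln K - (a * z + b) + ln (G z t)" by simp
  qed
  have inner: "deriv (\<lambda>z. ln (F z t)) y = deriv (\<lambda>z. ln (G z t)) y - a" for y
  proof -
    have "((\<lambda>z. ln K - (a * z + b) + ln (G z t)) has_real_derivative
        deriv (\<lambda>z. ln (G z t)) y - a) (at y)"
      by (rule derivative_eq_intros hd refl)+ simp
    then show ?thesis unfolding lnF by (simp add: DERIV_imp_deriv)
  qed
  show ?thesis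
    unfolding uxx_def inner deriv_minus_const ..
qed

lemma tau_eq:
  fixes M :: nat and p c :: "nat \<Rightarrow> real"
  assumes pos: "\<And>j. j < M \<Longrightarrow> 0 < p j"
    and mono: "\<And>j k. j < k \<Longrightarrow> k < M \<Longrightarrow> p j < p k"
  shows "tau M p c x t = (\<Prod>(j,k)\<in>pairsM M. p k - p j) *
     exp (- (\<Sum>j<M. p j * (x + (p j)\<^sup>2 * t + c j))) * tauH M p (ctilde M p c) x t"
proof -
  define \<phi> where "\<phi> \<mu> = restrict (\<lambda>j. 2 * \<mu> j - 1) {..<M}" for \<mu> :: "nat \<Rightarrow> real"
  define \<psi> where "\<psi> A = restrict (\<lambda>j. (A j + 1) / 2) {..<M}" for A :: "nat \<Rightarrow> real"
  have bij: "bij_betw \<phi> (PiE {..<M} (\<lambda>_. {0, 1})) (PiE {..<M} (\<lambda>_. {-1, 1}))"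
  proof (rule bij_betw_byWitness[where f'=\<psi>])
    show "\<forall>a\<in>PiE {..<M} (\<lambda>_. {0, 1}). \<psi> (\<phi> a) = a"
      by (auto simp: \<phi>_def \<psi>_def fun_eq_iff PiE_def extensional_def)
    show "\<forall>a\<in>PiE {..<M} (\<lambda>_. {-1, 1}). \<phi> (\<psi> a) = a"
      by (auto simp: \<phi>_def \<psi>_def fun_eq_iff PiE_def extensional_def field_simps)
    show "\<phi> ` PiE {..<M} (\<lambda>_. {0, 1}) \<subseteq> PiE {..<M} (\<lambda>_. {-1, 1})"
      by (auto simp: \<phi>_def PiE_def Pi_def)
    show "\<psi> ` PiE {..<M} (\<lambda>_. {-1, 1}) \<subseteq> PiE {..<M} (\<lambda>_. {0, 1})"
      by (auto simp: \<psi>_def PiE_def Pi_def)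
  qed
  have "tau M p c x t = (\<Sum>\<mu>\<in>PiE {..<M} (\<lambda>_. {0, 1}). exp (ThetaA M p c (\<phi> \<mu>) x t))"
    unfolding tau_def by (rule sum.reindex_bij_betw[OF bij, symmetric])
  also have "\<dots> = (\<Sum>\<mu>\<in>PiE {..<M} (\<lambda>_. {0, 1}). (\<Prod>(j,k)\<in>pairsM M. p k - p j) *
     exp (- (\<Sum>j<M. p j * (x + (p j)\<^sup>2 * t + c j))) *
     exp ((\<Sum>j<M. \<mu> j * (2 * p j * (x + (p j)\<^sup>2 * t + ctilde M p c j)))
           + (\<Sum>(j, k)\<in>pairsM M. b_coef p j k * \<mu> j * \<mu> k)))"
    unfolding \<phi>_def by (rule sum.cong[OF refl], rule per_mu[OF pos mono]) auto
  also have "\<dots> = (\<Prod>(j,k)\<in>pairsM M. p k - p j) *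
     exp (- (\<Sum>j<M. p j * (x + (p j)\<^sup>2 * t + c j))) * tauH M p (ctilde M p c) x t"
    unfolding tauH_def by (simp add: sum_distrib_left)
  finally show ?thesis .
qed

theorem proposition1:
  fixes M :: nat and p :: "nat \<Rightarrow> real"
  assumes "M \<ge> 1"
    and "0 < p 0"
    and "\<And>j k. j < k \<Longrightarrow> k < M \<Longrightarrow> p j < p k"
  shows "(\<forall>c x t. uxx (tau M p c) x t = uxx (tauH M p (ctilde M p c)) x t)
       \<and> {uxx (tau M p c) | c. True} = {uxx (tauH M p ct) | ct. True}"
proof -
  have pos: "0 < p j" if "j < M" for j
  proof (cases "j = 0")
    case True then show ?thesis using assms(2) by simp
  next
    case False then show ?thesis using assms(2) assms(3)[of 0 j] that by simp
  qed
  have Kpos: "(\<Prod>(j,k)\<in>pairsM M. p k - p j) > 0"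
    by (rule prod_pos) (auto simp: pairsM_def intro: assms(3) simp: algebra_simps)
  have Hpos: "tauH M p ct z t > 0" for ct z t
    unfolding tauH_def
    by (rule sum_pos) (auto simp: PiE_eq_empty_iff intro: finite_PiE)
  have Hd: "\<exists>D. ((\<lambda>z. tauH M p ct z t) has_real_derivative D) (at y)" for ct t y
    unfolding tauH_def
    by (rule exI, (rule derivative_intros)+)
  have main: "uxx (tau M p c) x t = uxx (tauH M p (ctilde M p c)) x t" for c x t
  proof (rule uxx_eq[OF _ Kpos Hpos Hd])
    fix z
    have "(\<Sum>j<M. p j * (z + (p j)\<^sup>2 * t + c j)) =
        (\<Sum>j<M. p j) * z + (\<Sum>j<M. p j * ((p j)\<^sup>2 * t + c j))"
    proof -
      have "(\<Sum>j<M. p j * (z + (p j)\<^sup>2 * t + c j)) = (\<Sum>j<M. p j * z + p j * ((p j)\<^sup>2 * t + c j))"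
        by (rule sum.cong) (auto simp: algebra_simps)
      also have "\<dots> = (\<Sum>j<M. p j * z) + (\<Sum>j<M. p j * ((p j)\<^sup>2 * t + c j))"
        by (rule sum.distrib)
      finally show ?thesis by (simp add: sum_distrib_right)
    qed
    then show "tau M p c z t = (\<Prod>(j,k)\<in>pairsM M. p k - p j) *
       exp (- ((\<Sum>j<M. p j) * z + (\<Sum>j<M. p j * ((p j)\<^sup>2 * t + c j)))) * tauH M p (ctilde M p c) z t"
      using tau_eq[OF pos assms(3), where c=c and x=z and t=t] by simp
  qed
  have fun_main: "uxx (tau M p c) = uxx (tauH M p (ctilde M p c))" for c
    using main by (simp add: fun_eq_iff)
  have surj: "ctilde M p (\<lambda>j. ct j - (ctilde M p (\<lambda>_. 0) j)) = ct" for ct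
    by (simp add: ctilde_def fun_eq_iff)
  have "{uxx (tau M p c) | c. True} = {uxx (tauH M p ct) | ct. True}"
  proof (intro set_eqI iffI)
    fix f assume "f \<in> {uxx (tau M p c) | c. True}"
    then show "f \<in> {uxx (tauH M p ct) | ct. True}" using fun_main by blast
  next
    fix f assume "f \<in> {uxx (tauH M p ct) | ct. True}"
    then obtain ct where "f = uxx (tauH M p ct)" by blast
    then have "f = uxx (tau M p (\<lambda>j. ct j - (ctilde M p (\<lambda>_. 0) j)))"
      using fun_main surj by simp
    then show "f \<in> {uxx (tau M p c) | c. True}" by blast
  qed
  then show ?thesis using main by blast
qed

end
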